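(* Let $\delta_1>0$ be an admissible one-dimensional sum-product exponent, i.e. a constant such that every finite, non-empty set $B\subseteq\mathbb{R}$ satisfies $|B+B|+|B\cdot B|\gtrsim |B|^{1+\delta_1}$, and for $u\in\mathbb{N}$ put $\delta_u=\delta_1/u$. Let $d\ge 2$, let $H$ be an axis aligned affine subspace of $\mathbb{R}^d$ of dimension $r$ with $1\le r\le d-1$, and let $A$ be a finite, non-empty subset of $H$. Then \[ |A+A|+|A\cdot A| \gtrsim_r |A|^{1+\delta_r}. \]
   Context: Addition and multiplication in $\mathbb{R}^d$ are coordinatewise, and $A+A=\{a+b:a,b\in A\}$, $A\cdot A=\{a\cdot b: a,b\in A\}$. An affine subspace $H\subseteq\mathbb{R}^d$ is axis aligned if $H=X_1\times\cdots\times X_d$ where for each $i$ either $X_i=\{a_i\}$ for some $a_i\in\mathbb{R}$ or $X_i=\mathbb{R}$. Notation: $X\gtrsim_z Y$ means $|X|\ge C|Y|(\log|A|)^{D}$ for some constants $C>0$ and $D$ depending only on the parameter $z$ (with $A$ the set under consideration); $\gtrsim$ is the same with absolute constants. By a result of Shakan, $\delta_1=1/3+5/5277$ is admissible. *)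

theory Defs
  imports Complex_Main
begin

definition sumset_real :: "real set \<Rightarrow> real set" where
  "sumset_real B = {x + y | x y. x \<in> B \<and> y \<in> B}"

definition prodset_real :: "real set \<Rightarrow> real set" where
  "prodset_real B = {x * y | x y. x \<in> B \<and> y \<in> B}"

(* Points of R^d are represented as functions nat => real vanishing at all
   indices >= d; coordinates are indexed by {0..<d}. *)
definition sumset_vec :: "(nat \<Rightarrow> real) set \<Rightarrow> (nat \<Rightarrow> real) set" where
  "sumset_vec A = {(\<lambda>i. x i + y i) | x y. x \<in> A \<and> y \<in> A}"

definition prodset_vec :: "(nat \<Rightarrow> real) set \<Rightarrow> (nat \<Rightarrow> real) set" where
  "prodset_vec A = {(\<lambda>i. x i * y i) | x y. x \<in> A \<and> y \<in> A}"

(* Axis aligned affine subspace of R^d: the coordinates in S are free,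
   coordinate i < d outside S is fixed to a i. Its dimension is card S. *)
definition axis_subspace :: "nat \<Rightarrow> nat set \<Rightarrow> (nat \<Rightarrow> real) \<Rightarrow> (nat \<Rightarrow> real) set" where
  "axis_subspace d S a =
     {x. (\<forall>i. d \<le> i \<longrightarrow> x i = 0) \<and> (\<forall>i<d. i \<notin> S \<longrightarrow> x i = a i)}"

(* delta is an admissible one-dimensional sum-product exponent:
   |B+B| + |B.B| >~ |B|^(1+delta), with >~ allowing a constant C > 0 and a
   power (log |B|)^D of the logarithm. *)
definition sp_admissible :: "real \<Rightarrow> bool" where
  "sp_admissible \<delta> \<longleftrightarrow>
     (\<exists>C>0. \<exists>D::real. \<forall>B::real set. finite B \<and> B \<noteq> {} \<longrightarrow>
        real (card (sumset_real B)) + real (card (prodset_real B))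
          \<ge> C * real (card B) powr (1 + \<delta>) * ln (real (card B)) powr D)"

end

theory Submission
  imports Defs
begin


definition opset :: "(real \<Rightarrow> real \<Rightarrow> real) \<Rightarrow> (nat \<Rightarrow> real) set \<Rightarrow> (nat \<Rightarrow> real) set" where
  "opset op A = (\<lambda>p. \<lambda>i. op (fst p i) (snd p i)) ` (A \<times> A)"

definition opsetR :: "(real \<Rightarrow> real \<Rightarrow> real) \<Rightarrow> real set \<Rightarrow> real set" where
  "opsetR op B = (\<lambda>p. op (fst p) (snd p)) ` (B \<times> B)"

lemma sumset_vec_eq: "sumset_vec A = opset (+) A"
  unfolding sumset_vec_def opset_def by force
lemma prodset_vec_eq: "prodset_vec A = opset (*) A"
  unfolding prodset_vec_def opset_def by force
lemma sumset_real_eq: "sumset_real A = opsetR (+) A"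
  unfolding sumset_real_def opsetR_def by force
lemma prodset_real_eq: "prodset_real A = opsetR (*) A"
  unfolding prodset_real_def opsetR_def by force

lemma finite_opset: "finite A \<Longrightarrow> finite (opset op A)"
  unfolding opset_def by simp

lemma opset_mono: "A \<subseteq> A' \<Longrightarrow> finite A' \<Longrightarrow> card (opset op A) \<le> card (opset op A')"
  apply (rule card_mono)
   apply (simp add: finite_opset)
  unfolding opset_def by blast

lemma mem_opset: "x \<in> A \<Longrightarrow> y \<in> A \<Longrightarrow> (\<lambda>i. op (x i) (y i)) \<in> opset op A"
  unfolding opset_def by force

lemma opset_elim: "w \<in> opset op A \<Longrightarrow> \<exists>x\<in>A. \<exists>y\<in>A. w = (\<lambda>i. op (x i) (y i))"
  unfolding opset_def by force

lemma opsetR_elim: "s \<in> opsetR op B \<Longrightarrow> \<exists>b\<in>B. \<exists>b'\<in>B. s = op b b'"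
  unfolding opsetR_def by force

lemma finite_opsetR: "finite B \<Longrightarrow> finite (opsetR op B)"
  unfolding opsetR_def by simp

lemma fiber_lower:
  fixes A :: "(nat \<Rightarrow> real) set" and j :: nat and t :: nat
  assumes fin: "finite A"
    and big: "\<forall>b\<in>(\<lambda>x. x j) ` A. t \<le> card {x\<in>A. x j = b}"
    and inj: "\<forall>x\<in>A. \<forall>y\<in>A. inj_on (\<lambda>z i. op (x i) (z i)) {z\<in>A. z j = y j}"
  shows "t * card (opsetR op ((\<lambda>x. x j) ` A)) \<le> card (opset op A)"
proof -
  define B where "B = (\<lambda>x. x j) ` A"
  define T where "T = opsetR op B"
  have finT: "finite T" unfolding T_def B_def using fin by (simp add: finite_opsetR)
  define xs where "xs s = (SOME x. x \<in> A \<and> (\<exists>y\<in>A. s = op (x j) (y j)))" for s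
  define ys where "ys s = (SOME y. y \<in> A \<and> s = op (xs s j) (y j))" for s
  have xy: "xs s \<in> A \<and> ys s \<in> A \<and> s = op (xs s j) (ys s j)" if "s \<in> T" for s
  proof -
    from that obtain b b' where "b \<in> B" "b' \<in> B" "s = op b b'"
      unfolding T_def using opsetR_elim by blast
    then have "\<exists>x. x \<in> A \<and> (\<exists>y\<in>A. s = op (x j) (y j))" unfolding B_def by blast
    then have 1: "xs s \<in> A \<and> (\<exists>y\<in>A. s = op (xs s j) (y j))"
      unfolding xs_def by (rule someI_ex)
    then have "\<exists>y. y \<in> A \<and> s = op (xs s j) (y j)" by blast
    then have "ys s \<in> A \<and> s = op (xs s j) (ys s j)" unfolding ys_def by (rule someI_ex)
    with 1 show ?thesis by blast
  qed
  define G where "G s = (\<lambda>z i. op (xs s i) (z i)) ` {z\<in>A. z j = ys s j}" for s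
  have Gsub: "G s \<subseteq> opset op A" if "s \<in> T" for s
    using xy[OF that] unfolding G_def by (auto intro: mem_opset)
  have Gj: "w j = s" if "s \<in> T" "w \<in> G s" for s w
    using xy[OF that(1)] that(2) unfolding G_def by auto
  have disj: "\<forall>s\<in>T. \<forall>s'\<in>T. s \<noteq> s' \<longrightarrow> G s \<inter> G s' = {}"
    using Gj by blast
  have finG: "\<forall>s\<in>T. finite (G s)" unfolding G_def using fin by simp
  have cardG: "t \<le> card (G s)" if "s \<in> T" for s
  proof -
    have "card (G s) = card {z\<in>A. z j = ys s j}"
      unfolding G_def using inj xy[OF that] by (intro card_image) blast
    moreover have "t \<le> card {z\<in>A. z j = ys s j}"
      using big xy[OF that] by blast
    ultimately show ?thesis by simp
  qed
  have "t * card T = (\<Sum>s\<in>T. t)" by simp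
  also have "\<dots> \<le> (\<Sum>s\<in>T. card (G s))" by (rule sum_mono) (use cardG in auto)
  also have "\<dots> = card (\<Union>(G ` T))" using card_UN_disjoint[OF finT finG disj] by simp
  also have "\<dots> \<le> card (opset op A)"
    by (rule card_mono) (use fin finite_opset Gsub in auto)
  finally show ?thesis unfolding T_def B_def .
qed

lemma diag_lower:
  fixes A :: "(nat \<Rightarrow> real) set"
  assumes fin: "finite A" and finT: "finite T" and inj: "inj_on (\<lambda>b. op b b) T"
  shows "(\<Sum>b\<in>T. card (opset op {x\<in>A. x j = b})) \<le> card (opset op A)"
proof -
  define G where "G b = opset op {x\<in>A. x j = b}" for b
  have Gsub: "G b \<subseteq> opset op A" for b
    unfolding G_def opset_def by auto
  have Gj: "w j = op b b" if "w \<in> G b" for b w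
    using that unfolding G_def opset_def by auto
  have disj: "\<forall>s\<in>T. \<forall>s'\<in>T. s \<noteq> s' \<longrightarrow> G s \<inter> G s' = {}"
    using Gj inj unfolding inj_on_def by (metis disjoint_iff)
  have finG: "\<forall>s\<in>T. finite (G s)" unfolding G_def using fin by (simp add: finite_opset)
  have "(\<Sum>b\<in>T. card (G b)) = card (\<Union>(G ` T))" using card_UN_disjoint[OF finT finG disj] by simp
  also have "\<dots> \<le> card (opset op A)"
    by (rule card_mono) (use fin finite_opset Gsub in auto)
  finally show ?thesis unfolding G_def .
qed



lemma harm_bound: "N \<ge> 1 \<Longrightarrow> (\<Sum>t\<in>{1..N}. 1 / real t) \<le> 1 + ln (real N)"
proof (induction N rule: nat_induct_at_least)
  case base then show ?case by simp
next
  case (Suc n)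
  have n: "real n \<ge> 1" using Suc by simp
  have "ln (real n / real (Suc n)) \<le> real n / real (Suc n) - 1"
    by (rule ln_le_minus_one) (use n in simp)
  moreover have "ln (real n / real (Suc n)) = ln (real n) - ln (real (Suc n))"
    using n by (simp add: ln_div)
  moreover have "real n / real (Suc n) - 1 = - (1 / real (Suc n))"
    using n by (simp add: field_simps)
  ultimately have "1 / real (Suc n) \<le> ln (real (Suc n)) - ln (real n)" by linarith
  then show ?case using Suc by simp
qed

lemma layer_cake:
  fixes w :: "'b \<Rightarrow> nat"
  assumes finB: "finite B" and N: "N = (\<Sum>b\<in>B. w b)" and N1: "N \<ge> 1"
  shows "\<exists>t\<ge>1. real N \<le> (1 + ln (real N)) * (real t * real (card {b\<in>B. t \<le> w b}))"
proof (rule ccontr)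
  assume H: "\<not> ?thesis"
  define L where "L = 1 + ln (real N)"
  have L1: "L \<ge> 1" unfolding L_def using N1 by simp
  have wle: "w b \<le> N" if "b \<in> B" for b
    unfolding N using finB that by (simp add: member_le_sum)
  have wcard: "w b = (\<Sum>t\<in>{1..N}. if t \<le> w b then 1 else 0)" if "b \<in> B" for b
  proof -
    have "{t\<in>{1..N}. t \<le> w b} = {1..w b}" using wle[OF that] by auto
    then have "card {t\<in>{1..N}. t \<le> w b} = w b" by simp
    moreover have "{t\<in>{1..N}. t \<le> w b} = {1..N} \<inter> {t. t \<le> w b}" by auto
    ultimately show ?thesis by (simp add: sum.If_cases)
  qed
  have "N = (\<Sum>b\<in>B. \<Sum>t\<in>{1..N}. (if t \<le> w b then 1 else 0::nat))"
    using wcard by (subst N) (intro sum.cong, auto)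
  also have "\<dots> = (\<Sum>t\<in>{1..N}. \<Sum>b\<in>B. (if t \<le> w b then 1 else 0::nat))"
    by (rule sum.swap)
  also have "\<dots> = (\<Sum>t\<in>{1..N}. card {b\<in>B. t \<le> w b})"
    using finB by (simp add: sum.If_cases Int_def)
  finally have Neq: "real N = (\<Sum>t\<in>{1..N}. real (card {b\<in>B. t \<le> w b}))"
    by (metis of_nat_sum)
  have lt: "real (card {b\<in>B. t \<le> w b}) < real N / L * (1 / real t)" if "t \<in> {1..N}" for t
  proof -
    from that have t1: "t \<ge> 1" by simp
    from H t1 have "L * (real t * real (card {b\<in>B. t \<le> w b})) < real N"
      unfolding L_def by auto
    then show ?thesis using L1 t1 by (simp add: field_simps)
  qed
  have "(\<Sum>t\<in>{1..N}. real (card {b\<in>B. t \<le> w b})) < (\<Sum>t\<in>{1..N}. real N / L * (1 / real t))"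
    by (rule sum_strict_mono) (use lt N1 in auto)
  then have "real N < (\<Sum>t\<in>{1..N}. real N / L * (1 / real t))" using Neq by simp
  also have "\<dots> = real N / L * (\<Sum>t\<in>{1..N}. 1 / real t)"
    by (simp add: sum_distrib_left)
  also have "\<dots> \<le> real N / L * L"
    by (rule mult_left_mono) (use harm_bound[OF N1] L1 in \<open>auto simp: L_def\<close>)
  also have "\<dots> = real N" using L1 by simp
  finally show False by simp
qed



definition Lg :: "nat \<Rightarrow> real" where "Lg n = 1 + ln (real n)"

lemma Lg_ge1: "n \<ge> 1 \<Longrightarrow> Lg n \<ge> 1" unfolding Lg_def by simp
lemma Lg_mono: "1 \<le> m \<Longrightarrow> m \<le> n \<Longrightarrow> Lg m \<le> Lg n" unfolding Lg_def by simp

definition FV :: "(nat \<Rightarrow> real) set \<Rightarrow> real" where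
  "FV A = real (card (opset (+) A)) + real (card (opset (*) A))"
definition FR :: "real set \<Rightarrow> real" where
  "FR B = real (card (opsetR (+) B)) + real (card (opsetR (*) B))"

lemma FV_mono: "A \<subseteq> A' \<Longrightarrow> finite A' \<Longrightarrow> FV A \<le> FV A'"
  unfolding FV_def using opset_mono[of A A' "(+)"] opset_mono[of A A' "(*)"] by linarith

definition agree :: "nat set \<Rightarrow> (nat \<Rightarrow> real) set \<Rightarrow> bool" where
  "agree S A \<longleftrightarrow> (\<forall>x\<in>A. \<forall>y\<in>A. \<forall>i. i \<notin> S \<longrightarrow> x i = y i)"

definition good1 :: "real \<Rightarrow> real \<Rightarrow> real \<Rightarrow> bool" where
  "good1 \<delta> c E \<longleftrightarrow> (\<forall>B. finite B \<longrightarrow> B \<noteq> {} \<longrightarrow>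
     FR B \<ge> c * real (card B) powr (1 + \<delta>) / Lg (card B) powr E)"

definition goodr :: "real \<Rightarrow> nat \<Rightarrow> real \<Rightarrow> real \<Rightarrow> bool" where
  "goodr \<delta> r c E \<longleftrightarrow> (\<forall>S A. finite S \<longrightarrow> card S = r \<longrightarrow> finite A \<longrightarrow> A \<noteq> {} \<longrightarrow> agree S A \<longrightarrow>
     FV A \<ge> c * real (card A) powr (1 + \<delta> / real r) / Lg (card A) powr E)"

lemma opsetR_single: "opsetR op {b} = {op b b}" unfolding opsetR_def by simp

lemma FR_single: "FR {b} = 2" unfolding FR_def by (simp add: opsetR_single)

lemma ln2_ge_half: "ln (2::real) \<ge> 1/2"
proof -
  have "ln (1/2::real) \<le> 1/2 - 1" by (rule ln_le_minus_one) simp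
  then show ?thesis by (simp add: ln_div)
qed

lemma sp_to_good1:
  assumes "sp_admissible \<delta>"
  shows "\<exists>c>0. \<exists>E\<ge>0. good1 \<delta> c E"
proof -
  from assms obtain C D where C: "C > 0" and H: "\<And>B::real set. finite B \<Longrightarrow> B \<noteq> {} \<Longrightarrow>
      real (card (sumset_real B)) + real (card (prodset_real B))
          \<ge> C * real (card B) powr (1 + \<delta>) * ln (real (card B)) powr D"
    unfolding sp_admissible_def by blast
  have H': "FR B \<ge> C * real (card B) powr (1 + \<delta>) * ln (real (card B)) powr D"
    if "finite B" "B \<noteq> {}" for B
    using H[OF that] unfolding FR_def sumset_real_eq prodset_real_eq .
  have single: "FR B \<ge> c * real (card B) powr (1 + \<delta>) / Lg (card B) powr E"
    if "finite B" "card B = 1" "c \<le> 2" for B c E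
  proof -
    from that obtain b where "B = {b}" by (metis card_1_singletonE)
    then show ?thesis using that by (simp add: FR_single Lg_def)
  qed
  show ?thesis
  proof (cases "D \<ge> 0")
    case True
    define c where "c = min 2 (C * (1/2) powr D)"
    have c0: "c > 0" unfolding c_def using C by simp
    have "good1 \<delta> c 0"
      unfolding good1_def
    proof (intro allI impI)
      fix B :: "real set" assume B: "finite B" "B \<noteq> {}"
      then have n1: "card B \<ge> 1" by (simp add: Suc_leI card_gt_0_iff)
      show "FR B \<ge> c * real (card B) powr (1 + \<delta>) / Lg (card B) powr 0"
      proof (cases "card B = 1")
        case True then show ?thesis using single[OF B(1) True, of c 0] by (simp add: c_def)
      next
        case False
        then have n2: "real (card B) \<ge> 2" using n1 by simp
        have "ln (real (card B)) \<ge> ln 2" using n2 by simp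
        then have l: "ln (real (card B)) \<ge> 1/2" using ln2_ge_half by linarith
        have "(1/2) powr D \<le> ln (real (card B)) powr D"
          by (rule powr_mono2) (use True l in auto)
        then have "C * (1/2) powr D \<le> C * ln (real (card B)) powr D"
          using C by simp
        then have "c \<le> C * ln (real (card B)) powr D" unfolding c_def by linarith
        then have "c * real (card B) powr (1 + \<delta>) \<le> (C * ln (real (card B)) powr D) * real (card B) powr (1 + \<delta>)"
          by (rule mult_right_mono) simp
        then have "c * real (card B) powr (1 + \<delta>) \<le> C * real (card B) powr (1 + \<delta>) * ln (real (card B)) powr D"
          by (simp add: mult_ac)
        moreover have "Lg (card B) powr 0 = 1" using Lg_ge1[OF n1] by simp
        ultimately show ?thesis using H'[OF B] by simp
      qed
    qed
    then show ?thesis using c0 by auto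
  next
    case False
    then have Dneg: "D < 0" by simp
    define c where "c = min 2 C"
    have c0: "c > 0" unfolding c_def using C by simp
    have "good1 \<delta> c (-D)"
      unfolding good1_def
    proof (intro allI impI)
      fix B :: "real set" assume B: "finite B" "B \<noteq> {}"
      then have n1: "card B \<ge> 1" by (simp add: Suc_leI card_gt_0_iff)
      show "FR B \<ge> c * real (card B) powr (1 + \<delta>) / Lg (card B) powr (-D)"
      proof (cases "card B = 1")
        case True then show ?thesis using single[OF B(1) True, of c "-D"] by (simp add: c_def)
      next
        case False
        then have n2: "real (card B) \<ge> 2" using n1 by simp
        have lpos: "ln (real (card B)) > 0" using n2 by simp
        have "Lg (card B) powr D \<le> ln (real (card B)) powr D"
          by (rule powr_mono2') (use Dneg lpos in \<open>auto simp: Lg_def\<close>)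
        moreover have "Lg (card B) powr D = 1 / Lg (card B) powr (-D)"
          using Lg_ge1[OF n1] by (simp add: powr_minus divide_inverse)
        ultimately have q: "1 / Lg (card B) powr (-D) \<le> ln (real (card B)) powr D" by simp
        have "c * (1 / Lg (card B) powr (-D)) \<le> C * ln (real (card B)) powr D"
          by (rule mult_mono) (use q C in \<open>auto simp: c_def\<close>)
        then have "(c * (1 / Lg (card B) powr (-D))) * real (card B) powr (1 + \<delta>) \<le> (C * ln (real (card B)) powr D) * real (card B) powr (1 + \<delta>)"
          by (rule mult_right_mono) simp
        then have "c * real (card B) powr (1 + \<delta>) / Lg (card B) powr (-D) \<le>
             C * real (card B) powr (1 + \<delta>) * ln (real (card B)) powr D"
          by (simp add: mult_ac)
        then show ?thesis using H'[OF B] by linarith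
      qed
    qed
    then show ?thesis using c0 Dneg by (intro exI[of _ c] conjI exI[of _ "-D"]) auto
  qed
qed

lemma card_fibers: "finite A \<Longrightarrow> card A = (\<Sum>b\<in>f ` A. card {x\<in>A. f x = b})"
proof -
  assume fin: "finite A"
  have "A = (\<Union>b\<in>f ` A. {x\<in>A. f x = b})" by auto
  then have "card A = card (\<Union>b\<in>f ` A. {x\<in>A. f x = b})" by simp
  also have "\<dots> = (\<Sum>b\<in>f ` A. card {x\<in>A. f x = b})"
    by (rule card_UN_disjoint) (use fin in auto)
  finally show ?thesis .
qed

lemma base_case:
  assumes g: "good1 \<delta> c E"
  shows "goodr \<delta> 1 c E"
  unfolding goodr_def
proof (intro allI impI)
  fix S A assume fS: "finite S" and cS: "card S = 1" and fA: "finite A" and ne: "A \<noteq> {}"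
    and ag: "agree S A"
  from cS obtain j where Sj: "S = {j}" by (metis card_1_singletonE)
  have injA: "inj_on (\<lambda>x. x j) A"
  proof (rule inj_onI)
    fix x y assume "x \<in> A" "y \<in> A" "x j = y j"
    then show "x = y" using ag Sj unfolding agree_def by (metis ext singletonD)
  qed
  have fibsing: "{z\<in>A. z j = y j} = {y}" if "y \<in> A" for y
    using injA that unfolding inj_on_def by auto
  have big: "\<forall>b\<in>(\<lambda>x. x j) ` A. 1 \<le> card {x\<in>A. x j = b}"
    using fibsing by auto
  have inj: "\<forall>x\<in>A. \<forall>y\<in>A. inj_on (\<lambda>z i. op (x i) (z i)) {z\<in>A. z j = y j}" for op :: "real \<Rightarrow> real \<Rightarrow> real"
    using fibsing by simp
  have "FR ((\<lambda>x. x j) ` A) \<le> FV A"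
    unfolding FR_def FV_def using fiber_lower[OF fA big inj, of "(+)"] fiber_lower[OF fA big inj, of "(*)"]
    by simp
  moreover have "card ((\<lambda>x. x j) ` A) = card A" using injA by (rule card_image)
  moreover have "FR ((\<lambda>x. x j) ` A) \<ge> c * real (card ((\<lambda>x. x j) ` A)) powr (1 + \<delta>) / Lg (card ((\<lambda>x. x j) ` A)) powr E"
    using g fA ne unfolding good1_def by simp
  ultimately show "FV A \<ge> c * real (card A) powr (1 + \<delta> / real 1) / Lg (card A) powr E" by simp
qed

lemma geo_max:
  fixes t k \<delta> :: real and r :: nat
  assumes t: "t \<ge> 1" and k: "k \<ge> 1" and r: "r \<ge> 2" and d: "\<delta> > 0"
  shows "(t * k) powr (\<delta> / r) \<le> max (t powr (\<delta> / (real r - 1))) (k powr \<delta>)"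
proof -
  define u where "u = t powr (\<delta> / (real r - 1))"
  define v where "v = k powr \<delta>"
  define m where "m = max u v"
  define \<theta> where "\<theta> = (real r - 1) / real r"
  have r1: "real r - 1 > 0" using r by simp
  have th: "0 \<le> \<theta>" "\<theta> \<le> 1" unfolding \<theta>_def using r by auto
  have upos: "u > 0" unfolding u_def using t by simp
  have vpos: "v > 0" unfolding v_def using k by simp
  have mpos: "m > 0" unfolding m_def using upos by simp
  have e: "\<delta> / (real r - 1) * ((real r - 1) / real r) = \<delta> / real r"
    using r1 by simp
  have "u powr \<theta> = t powr (\<delta> / real r)"
    unfolding u_def \<theta>_def powr_powr e ..
  moreover have "v powr (1 - \<theta>) = k powr (\<delta> / real r)"
    unfolding v_def \<theta>_def powr_powr using r by (simp add: field_simps)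
  ultimately have "(t * k) powr (\<delta> / r) = u powr \<theta> * v powr (1 - \<theta>)"
    using t k by (simp add: powr_mult)
  also have "\<dots> \<le> m powr \<theta> * m powr (1 - \<theta>)"
    by (rule mult_mono) (use th upos vpos in \<open>auto intro!: powr_mono2 simp: m_def\<close>)
  also have "\<dots> = m" using mpos by (simp add: powr_add[symmetric])
  finally show ?thesis unfolding m_def u_def v_def .
qed



lemma combine:
  fixes t k P F c0 c1 Lp \<delta> :: real and r :: nat
  assumes P: "P = t * k" and t: "t \<ge> 1" and k: "k \<ge> 1" and r: "r \<ge> 2" and d: "\<delta> > 0"
    and c0: "c0 > 0" and c1: "c1 > 0" and Lp: "Lp > 0"
    and h1: "c1 * P * t powr (\<delta> / (real r - 1)) / Lp \<le> 2 * F"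
    and h2: "c0 * P * k powr \<delta> / Lp \<le> F"
  shows "min (c1/2) c0 * P powr (1 + \<delta> / r) / Lp \<le> F"
proof -
  define u where "u = t powr (\<delta> / (real r - 1))"
  define v where "v = k powr \<delta>"
  have Ppos: "P > 0" using P t k by simp
  have u0: "u \<ge> 0" and v0: "v \<ge> 0" unfolding u_def v_def by simp_all
  have g: "P powr (\<delta> / r) \<le> max u v" unfolding u_def v_def P using geo_max[OF t k r d] .
  have "P powr (1 + \<delta> / r) = P * P powr (\<delta> / r)" using Ppos by (simp add: powr_add)
  also have "\<dots> \<le> P * max u v" using g Ppos by simp
  finally have e: "P powr (1 + \<delta> / r) \<le> P * max u v" .
  have "min (c1/2) c0 * P powr (1 + \<delta> / r) \<le> min (c1/2) c0 * (P * max u v)"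
    by (rule mult_left_mono[OF e]) (use c0 c1 in simp)
  also have "\<dots> \<le> F * Lp"
  proof (cases "u \<le> v")
    case True
    have m: "min (c1/2) c0 \<le> c0" by simp
    have "min (c1/2) c0 * (P * max u v) = min (c1/2) c0 * (P * v)" using True by simp
    also have "\<dots> \<le> c0 * (P * v)" by (rule mult_right_mono[OF m]) (use Ppos v0 in simp)
    finally have "min (c1/2) c0 * (P * max u v) \<le> c0 * P * v" by (simp add: mult_ac)
    also have "\<dots> \<le> F * Lp" using h2 Lp unfolding v_def by (simp add: field_simps)
    finally show ?thesis .
  next
    case False
    have m: "min (c1/2) c0 \<le> c1/2" by simp
    have "min (c1/2) c0 * (P * max u v) = min (c1/2) c0 * (P * u)" using False by simp
    also have "\<dots> \<le> (c1/2) * (P * u)" by (rule mult_right_mono[OF m]) (use Ppos u0 in simp)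
    finally have "min (c1/2) c0 * (P * max u v) \<le> (c1/2) * P * u" by (simp add: mult_ac)
    also have "\<dots> \<le> F * Lp" using h1 Lp unfolding u_def by (simp add: field_simps)
    finally show ?thesis .
  qed
  finally show ?thesis using Lp by (simp add: field_simps)
qed

lemma final_scale:
  fixes F c P n L E a :: real
  assumes h: "c * P powr a / L powr E \<le> F" and Pn: "P \<ge> n / L" and n: "n \<ge> 1" and L: "L \<ge> 1"
    and c: "c > 0" and a: "a \<ge> 0"
  shows "c * n powr a / L powr (E + a) \<le> F"
proof -
  have "n powr a / L powr a = (n / L) powr a" using n L by (simp add: powr_divide)
  also have "\<dots> \<le> P powr a" by (rule powr_mono2) (use a n L Pn in auto)
  finally have 1: "n powr a / L powr a \<le> P powr a" .
  have "c * n powr a / L powr (E + a) = c * (n powr a / L powr a) / L powr E"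
    using L by (simp add: powr_add field_simps)
  also have "\<dots> \<le> c * P powr a / L powr E"
    by (intro divide_right_mono mult_left_mono 1) (use c in auto)
  finally show ?thesis using h by linarith
qed



lemma square_inj_nonneg: "inj_on (\<lambda>b::real. b * b) {b\<in>T. b \<ge> 0}"
  by (rule inj_onI) (auto simp: square_eq_iff)
lemma square_inj_nonpos: "inj_on (\<lambda>b::real. b * b) {b\<in>T. b \<le> 0}"
  by (rule inj_onI) (auto simp: square_eq_iff)
lemma double_inj: "inj_on (\<lambda>b::real. b + b) T"
  by (rule inj_onI) auto

lemma diag_FV:
  fixes A :: "(nat \<Rightarrow> real) set" and T :: "real set"
  assumes fA: "finite A" and fT: "finite T"
  shows "(\<Sum>b\<in>T. FV {x\<in>A. x j = b}) \<le> 2 * FV A"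
proof -
  define g where "g b = card (opset (*) {x\<in>A. x j = b})" for b
  define Tp where "Tp = {b\<in>T. b \<ge> 0}"
  define Tm where "Tm = {b\<in>T. b \<le> 0}"
  have s1: "(\<Sum>b\<in>T. card (opset (+) {x\<in>A. x j = b})) \<le> card (opset (+) A)"
    by (rule diag_lower[where op="(+)", OF fA fT double_inj])
  have sp: "(\<Sum>b\<in>Tp. g b) \<le> card (opset (*) A)"
    unfolding g_def Tp_def by (rule diag_lower[where op="(*)", OF fA _ square_inj_nonneg]) (use fT in simp)
  have sm: "(\<Sum>b\<in>Tm. g b) \<le> card (opset (*) A)"
    unfolding g_def Tm_def by (rule diag_lower[where op="(*)", OF fA _ square_inj_nonpos]) (use fT in simp)
  have TU: "T = Tp \<union> Tm" unfolding Tp_def Tm_def by auto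
  have "(\<Sum>b\<in>T. g b) \<le> (\<Sum>b\<in>Tp \<union> Tm. g b) + (\<Sum>b\<in>Tp \<inter> Tm. g b)" using TU by simp
  also have "\<dots> = (\<Sum>b\<in>Tp. g b) + (\<Sum>b\<in>Tm. g b)"
    by (rule sum.union_inter) (use fT in \<open>auto simp: Tp_def Tm_def\<close>)
  finally have s2: "(\<Sum>b\<in>T. g b) \<le> 2 * card (opset (*) A)" using sp sm by linarith
  have "(\<Sum>b\<in>T. FV {x\<in>A. x j = b}) = real (\<Sum>b\<in>T. card (opset (+) {x\<in>A. x j = b})) + real (\<Sum>b\<in>T. g b)"
    unfolding FV_def g_def by (simp add: sum.distrib)
  also have "\<dots> \<le> 2 * FV A"
  proof -
    have r1: "real (\<Sum>b\<in>T. card (opset (+) {x\<in>A. x j = b})) \<le> real (card (opset (+) A))"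
      using s1 by (simp only: of_nat_le_iff)
    have r2: "real (\<Sum>b\<in>T. g b) \<le> real (2 * card (opset (*) A))"
      using s2 by (simp only: of_nat_le_iff)
    show ?thesis unfolding FV_def using r1 r2 by simp
  qed
  finally show ?thesis .
qed



lemma nonzero_case:
  fixes \<delta> c0 E0 c1 E1 :: real and r j :: nat and S :: "nat set" and A :: "(nat \<Rightarrow> real) set"
  assumes r: "r \<ge> 2" and d: "\<delta> > 0" and c0: "c0 > 0" and E0: "E0 \<ge> 0" and c1: "c1 > 0" and E1: "E1 \<ge> 0"
    and g0: "good1 \<delta> c0 E0" and g1: "goodr \<delta> (r - 1) c1 E1"
    and fS: "finite S" and cS: "card S = r" and jS: "j \<in> S" and fA: "finite A" and ne: "A \<noteq> {}"
    and ag: "agree S A" and nz: "\<forall>x\<in>A. \<forall>i\<in>S. x i \<noteq> 0"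
  shows "FV A \<ge> min (c1/2) c0 * real (card A) powr (1 + \<delta> / r) / Lg (card A) powr (max E0 E1 + (1 + \<delta> / r))"
proof -
  define n where "n = card A"
  have n1: "n \<ge> 1" unfolding n_def using fA ne by (simp add: Suc_leI card_gt_0_iff)
  define L where "L = Lg n"
  have L1: "L \<ge> 1" unfolding L_def using Lg_ge1[OF n1] .
  define E2 where "E2 = max E0 E1"
  define w where "w b = card {x\<in>A. x j = b}" for b
  define B where "B = (\<lambda>x. x j) ` A"
  have finB: "finite B" unfolding B_def using fA by simp
  have nsum: "n = (\<Sum>b\<in>B. w b)" unfolding n_def w_def B_def using card_fibers[OF fA] .
  obtain t where t1: "t \<ge> 1" and tk: "real n \<le> (1 + ln (real n)) * (real t * real (card {b\<in>B. t \<le> w b}))"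
    using layer_cake[OF finB nsum n1] by blast
  define Bt where "Bt = {b\<in>B. t \<le> w b}"
  define k where "k = card Bt"
  have finBt: "finite Bt" unfolding Bt_def using finB by simp
  define A' where "A' = {x\<in>A. t \<le> w (x j)}"
  have A'sub: "A' \<subseteq> A" unfolding A'_def by auto
  have fA': "finite A'" using A'sub fA finite_subset by blast
  have imgA': "(\<lambda>x. x j) ` A' = Bt" unfolding A'_def Bt_def B_def by auto
  have fibA': "{x\<in>A'. x j = b} = {x\<in>A. x j = b}" if "b \<in> Bt" for b
    using that unfolding A'_def Bt_def by auto
  have PL: "real n \<le> L * (real t * real k)" using tk unfolding L_def Lg_def k_def Bt_def .
  have k1: "k \<ge> 1"
  proof (rule ccontr)
    assume "\<not> k \<ge> 1" then have "k = 0" by simp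
    then show False using PL n1 by simp
  qed
  have Btne: "Bt \<noteq> {}" using k1 unfolding k_def by auto
  have kn: "k \<le> n"
  proof -
    have "k \<le> card B" unfolding k_def Bt_def by (rule card_mono[OF finB]) auto
    also have "card B \<le> n" unfolding B_def n_def by (rule card_image_le[OF fA])
    finally show ?thesis .
  qed
  have wn: "w b \<le> n" for b unfolding w_def n_def by (rule card_mono[OF fA]) auto
  have cardA': "card A' = (\<Sum>b\<in>Bt. w b)"
  proof -
    have "card A' = (\<Sum>b\<in>Bt. card {x\<in>A'. x j = b})" using card_fibers[OF fA', of "\<lambda>x. x j"] imgA' by simp
    also have "\<dots> = (\<Sum>b\<in>Bt. w b)" using fibA' unfolding w_def by (intro sum.cong) auto
    finally show ?thesis .
  qed
  have tkA': "real t * real k \<le> real (card A')"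
  proof -
    have "t * k = (\<Sum>b\<in>Bt. t)" unfolding k_def by simp
    also have "\<dots> \<le> (\<Sum>b\<in>Bt. w b)" by (rule sum_mono) (auto simp: Bt_def)
    finally have "t * k \<le> card A'" using cardA' by simp
    then show ?thesis by (simp only: of_nat_mult[symmetric] of_nat_le_iff)
  qed
  define P where "P = real t * real k"
  have Pn: "P \<ge> real n / L" unfolding P_def using PL L1 by (simp add: field_simps)
  have LE: "Lg m powr E \<le> L powr E2" if "1 \<le> m" "m \<le> n" "0 \<le> E" "E \<le> E2" for m E
  proof -
    have "Lg m powr E \<le> L powr E" unfolding L_def
      by (rule powr_mono2) (use that Lg_mono[OF that(1,2)] Lg_ge1[OF that(1)] in auto)
    also have "\<dots> \<le> L powr E2" by (rule powr_mono) (use that L1 in auto)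
    finally show ?thesis .
  qed
  have LE2pos: "L powr E2 > 0" using L1 by simp
  have big: "\<forall>b\<in>(\<lambda>x. x j) ` A'. t \<le> card {x\<in>A'. x j = b}"
    using imgA' fibA' unfolding Bt_def w_def by auto
  have injp: "\<forall>x\<in>A'. \<forall>y\<in>A'. inj_on (\<lambda>z i. x i + z i) {z\<in>A'. z j = y j}"
  proof (intro ballI inj_onI)
    fix x y z z' :: "nat \<Rightarrow> real" assume eq: "(\<lambda>i. x i + z i) = (\<lambda>i. x i + z' i)"
    show "z = z'"
    proof
      fix i show "z i = z' i" using fun_cong[OF eq, of i] by simp
    qed
  qed
  have injm: "\<forall>x\<in>A'. \<forall>y\<in>A'. inj_on (\<lambda>z i. x i * z i) {z\<in>A'. z j = y j}"
  proof (intro ballI inj_onI)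
    fix x y z z' :: "nat \<Rightarrow> real" assume x: "x \<in> A'" and z: "z \<in> {z\<in>A'. z j = y j}" and z': "z' \<in> {z\<in>A'. z j = y j}"
      and eq: "(\<lambda>i. x i * z i) = (\<lambda>i. x i * z' i)"
    show "z = z'"
    proof
      fix i
      show "z i = z' i"
      proof (cases "i \<in> S")
        case True
        then have "x i \<noteq> 0" using nz x A'sub by auto
        moreover have "x i * z i = x i * z' i" using fun_cong[OF eq, of i] by simp
        ultimately show ?thesis by simp
      next
        case False
        then show ?thesis using ag z z' A'sub unfolding agree_def by auto
      qed
    qed
  qed
  have b2p: "t * card (opsetR (+) Bt) \<le> card (opset (+) A')"
    using fiber_lower[OF fA' big injp] imgA' by simp
  have b2m: "t * card (opsetR (*) Bt) \<le> card (opset (*) A')"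
    using fiber_lower[OF fA' big injm] imgA' by simp
  have FVFR: "real t * FR Bt \<le> FV A'"
  proof -
    have "real t * real (card (opsetR (+) Bt)) \<le> real (card (opset (+) A'))"
      using b2p by (simp only: of_nat_mult[symmetric] of_nat_le_iff)
    moreover have "real t * real (card (opsetR (*) Bt)) \<le> real (card (opset (*) A'))"
      using b2m by (simp only: of_nat_mult[symmetric] of_nat_le_iff)
    ultimately show ?thesis unfolding FR_def FV_def by (simp add: distrib_left)
  qed
  have FRk: "FR Bt \<ge> c0 * real k powr (1 + \<delta>) / Lg k powr E0"
    using g0 finBt Btne unfolding good1_def k_def by blast
  have kpow: "real k powr (1 + \<delta>) = real k * real k powr \<delta>" using k1 by (simp add: powr_add)
  have "c0 * real k powr (1 + \<delta>) / L powr E2 \<le> c0 * real k powr (1 + \<delta>) / Lg k powr E0"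
    by (intro divide_left_mono LE mult_nonneg_nonneg) (use k1 kn E0 c0 L1 LE2pos Lg_ge1[OF k1] in \<open>auto simp: E2_def\<close>)
  also have "\<dots> \<le> FR Bt" by (rule FRk)
  finally have "real t * (c0 * real k powr (1 + \<delta>) / L powr E2) \<le> real t * FR Bt"
    by (intro mult_left_mono) auto
  then have h2: "c0 * P * real k powr \<delta> / L powr E2 \<le> FV A'"
    using FVFR unfolding P_def kpow by (simp add: field_simps)
  have rr: "real (r - 1) = real r - 1" using r by simp
  have IH: "FV {x\<in>A. x j = b} \<ge> c1 * real (w b) powr (1 + \<delta> / (real r - 1)) / Lg (w b) powr E1"
    if b: "b \<in> Bt" for b
  proof -
    have "finite (S - {j})" using fS by simp
    moreover have "card (S - {j}) = r - 1" using cS jS fS by simp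
    moreover have "finite {x\<in>A. x j = b}" using fA by simp
    moreover have "{x\<in>A. x j = b} \<noteq> {}" using b unfolding Bt_def B_def by auto
    moreover have "agree (S - {j}) {x\<in>A. x j = b}"
      using ag unfolding agree_def by auto
    ultimately show ?thesis using g1 unfolding goodr_def w_def rr by blast
  qed
  have IH2: "c1 * real (w b) * real t powr (\<delta> / (real r - 1)) / L powr E2 \<le> FV {x\<in>A. x j = b}"
    if b: "b \<in> Bt" for b
  proof -
    have wt: "t \<le> w b" using b unfolding Bt_def by simp
    then have w1: "w b \<ge> 1" using t1 by simp
    have "real t powr (\<delta> / (real r - 1)) \<le> real (w b) powr (\<delta> / (real r - 1))"
      by (rule powr_mono2) (use wt r d in auto)
    then have "c1 * real (w b) * real t powr (\<delta> / (real r - 1)) \<le> c1 * real (w b) * real (w b) powr (\<delta> / (real r - 1))"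
      using c1 by (intro mult_left_mono) auto
    also have "\<dots> = c1 * real (w b) powr (1 + \<delta> / (real r - 1))" using w1 by (simp add: powr_add)
    finally have 1: "c1 * real (w b) * real t powr (\<delta> / (real r - 1)) \<le> c1 * real (w b) powr (1 + \<delta> / (real r - 1))" .
    have "c1 * real (w b) * real t powr (\<delta> / (real r - 1)) / L powr E2 \<le> c1 * real (w b) powr (1 + \<delta> / (real r - 1)) / L powr E2"
      using 1 LE2pos by (simp add: divide_right_mono)
    also have "\<dots> \<le> c1 * real (w b) powr (1 + \<delta> / (real r - 1)) / Lg (w b) powr E1"
      by (intro divide_left_mono LE mult_nonneg_nonneg) (use w1 wn E1 c1 L1 LE2pos Lg_ge1[OF w1] in \<open>auto simp: E2_def\<close>)
    also have "\<dots> \<le> FV {x\<in>A. x j = b}" using IH[OF b] .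
    finally show ?thesis .
  qed
  have "(\<Sum>b\<in>Bt. c1 * real (w b) * real t powr (\<delta> / (real r - 1)) / L powr E2) \<le> (\<Sum>b\<in>Bt. FV {x\<in>A. x j = b})"
    by (rule sum_mono) (rule IH2)
  also have "\<dots> = (\<Sum>b\<in>Bt. FV {x\<in>A'. x j = b})" using fibA' by (intro sum.cong) auto
  also have "\<dots> \<le> 2 * FV A'" by (rule diag_FV[OF fA' finBt])
  finally have s: "(\<Sum>b\<in>Bt. c1 * real (w b) * real t powr (\<delta> / (real r - 1)) / L powr E2) \<le> 2 * FV A'" .
  have "(\<Sum>b\<in>Bt. c1 * real (w b) * real t powr (\<delta> / (real r - 1)) / L powr E2)
      = c1 * real (card A') * real t powr (\<delta> / (real r - 1)) / L powr E2"
    unfolding cardA' by (simp add: sum_distrib_left sum_distrib_right sum_divide_distrib[symmetric] mult_ac)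
  moreover have "c1 * P * real t powr (\<delta> / (real r - 1)) / L powr E2 \<le> c1 * real (card A') * real t powr (\<delta> / (real r - 1)) / L powr E2"
    using tkA' c1 LE2pos unfolding P_def by (intro divide_right_mono mult_right_mono mult_left_mono) auto
  ultimately have h1: "c1 * P * real t powr (\<delta> / (real r - 1)) / L powr E2 \<le> 2 * FV A'" using s by linarith
  have comb: "min (c1/2) c0 * P powr (1 + \<delta> / r) / L powr E2 \<le> FV A'"
    by (rule combine[OF P_def _ _ r d c0 c1 LE2pos h1 h2]) (use t1 k1 in auto)
  have "min (c1/2) c0 * real n powr (1 + \<delta> / r) / L powr (E2 + (1 + \<delta> / r)) \<le> FV A'"
    by (rule final_scale[OF comb Pn]) (use n1 L1 c0 c1 d in auto)
  also have "FV A' \<le> FV A" by (rule FV_mono[OF A'sub fA])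
  finally show ?thesis unfolding n_def L_def E2_def by simp
qed



lemma scale_le:
  fixes c c' X L E E' :: real
  assumes "0 \<le> c" "c \<le> c'" "0 \<le> X" "1 \<le> L" "E' \<le> E"
  shows "c * X / L powr E \<le> c' * X / L powr E'"
proof -
  have "L powr E' \<le> L powr E" by (rule powr_mono) (use assms in auto)
  moreover have "L powr E' > 0" using assms by simp
  ultimately have "c * X / L powr E \<le> c * X / L powr E'"
    by (intro divide_left_mono mult_nonneg_nonneg) (use assms in auto)
  also have "\<dots> \<le> c' * X / L powr E'"
    by (intro divide_right_mono mult_right_mono) (use assms in auto)
  finally show ?thesis .
qed

lemma zero_case:
  fixes \<delta> c1 E1 :: real and r k :: nat and S :: "nat set" and A :: "(nat \<Rightarrow> real) set"
  assumes r: "r \<ge> 2" and d: "\<delta> > 0" and c1: "c1 > 0" and E1: "E1 \<ge> 0"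
    and g1: "goodr \<delta> (r - 1) c1 E1"
    and fS: "finite S" and cS: "card S = r" and kS: "k \<in> S" and fA: "finite A" and ne: "A \<noteq> {}"
    and ag: "agree S A" and big: "real (card A) \<le> 2 * real r * real (card {x\<in>A. x k = 0})"
  shows "FV A \<ge> c1 * (2 * real r) powr (-(1 + \<delta> / r)) * real (card A) powr (1 + \<delta> / r) / Lg (card A) powr E1"
proof -
  define A0 where "A0 = {x\<in>A. x k = 0}"
  define n where "n = card A"
  define m where "m = card A0"
  define a where "a = 1 + \<delta> / r"
  have n1: "n \<ge> 1" unfolding n_def using fA ne by (simp add: Suc_leI card_gt_0_iff)
  have fA0: "finite A0" unfolding A0_def using fA by simp
  have A0sub: "A0 \<subseteq> A" unfolding A0_def by auto
  have mn: "m \<le> n" unfolding m_def n_def by (rule card_mono[OF fA A0sub])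
  have m1: "m \<ge> 1"
  proof (rule ccontr)
    assume "\<not> m \<ge> 1" then have "m = 0" by simp
    then show False using big n1 unfolding m_def A0_def n_def by simp
  qed
  have ne0: "A0 \<noteq> {}" using m1 unfolding m_def by auto
  have rr: "real (r - 1) = real r - 1" using r by simp
  have IH: "FV A0 \<ge> c1 * real m powr (1 + \<delta> / (real r - 1)) / Lg m powr E1"
  proof -
    have "finite (S - {k})" using fS by simp
    moreover have "card (S - {k}) = r - 1" using cS kS fS by simp
    moreover have "agree (S - {k}) A0" using ag unfolding agree_def A0_def by auto
    ultimately show ?thesis using g1 fA0 ne0 unfolding goodr_def m_def rr by blast
  qed
  have a0: "a \<ge> 0" unfolding a_def using d by simp
  have "\<delta> / r \<le> \<delta> / (real r - 1)" using r d by (intro divide_left_mono) auto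
  then have "real m powr a \<le> real m powr (1 + \<delta> / (real r - 1))"
    unfolding a_def by (intro powr_mono) (use m1 in auto)
  moreover have "(2 * real r) powr (-a) * real n powr a \<le> real m powr a"
  proof -
    have "(real n / (2 * real r)) powr a = real n powr a / (2 * real r) powr a"
      by (rule powr_divide)
    also have "\<dots> = (2 * real r) powr (-a) * real n powr a"
      by (simp only: powr_minus divide_inverse mult.commute)
    finally have "(2 * real r) powr (-a) * real n powr a = (real n / (2 * real r)) powr a" by simp
    also have "\<dots> \<le> real m powr a"
    proof (rule powr_mono2)
      show "real n / (2 * real r) \<le> real m" using big r unfolding n_def m_def A0_def
        by (simp add: divide_le_eq mult_ac)
    qed (use a0 r in auto)
    finally show ?thesis .
  qed
  ultimately have 1: "(2 * real r) powr (-a) * real n powr a \<le> real m powr (1 + \<delta> / (real r - 1))" by linarith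
  have "c1 * (2 * real r) powr (-a) * real n powr a / Lg n powr E1
      \<le> c1 * real m powr (1 + \<delta> / (real r - 1)) / Lg n powr E1"
    using 1 c1 Lg_ge1[OF n1] by (simp add: divide_right_mono mult.assoc)
  also have "\<dots> \<le> c1 * real m powr (1 + \<delta> / (real r - 1)) / Lg m powr E1"
    by (intro divide_left_mono powr_mono2 Lg_mono mult_nonneg_nonneg) (use m1 mn E1 c1 Lg_ge1[OF m1] Lg_ge1[OF n1] in auto)
  also have "\<dots> \<le> FV A0" by (rule IH)
  also have "\<dots> \<le> FV A" by (rule FV_mono[OF A0sub fA])
  finally show ?thesis unfolding a_def n_def .
qed



lemma step:
  fixes \<delta> c0 E0 c1 E1 :: real and r :: nat
  assumes r: "r \<ge> 2" and d: "\<delta> > 0" and c0: "c0 > 0" and E0: "E0 \<ge> 0" and c1: "c1 > 0" and E1: "E1 \<ge> 0"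
    and g0: "good1 \<delta> c0 E0" and g1: "goodr \<delta> (r - 1) c1 E1"
  shows "\<exists>c>0. \<exists>E\<ge>0. goodr \<delta> r c E"
proof -
  define a where "a = 1 + \<delta> / r"
  define E where "E = max E0 E1 + a"
  define cz where "cz = c1 * (2 * real r) powr (-a)"
  define cn where "cn = min (c1/2) c0 * 2 powr (-a)"
  define c where "c = min cz cn"
  have a0: "a \<ge> 0" unfolding a_def using d by simp
  have cpos: "c > 0" unfolding c_def cz_def cn_def using c0 c1 r by simp
  have E0': "E \<ge> 0" unfolding E_def using E0 a0 by simp
  have "goodr \<delta> r c E"
    unfolding goodr_def
  proof (intro allI impI)
    fix S A assume fS: "finite S" and cS: "card S = r" and fA: "finite A" and ne: "A \<noteq> {}"
      and ag: "agree S A"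
    define n where "n = card A"
    have n1: "n \<ge> 1" unfolding n_def using fA ne by (simp add: Suc_leI card_gt_0_iff)
    have Ln: "Lg n \<ge> 1" by (rule Lg_ge1[OF n1])
    have npos: "real n powr a \<ge> 0" by simp
    define As where "As = {x\<in>A. \<forall>i\<in>S. x i \<noteq> 0}"
    show "FV A \<ge> c * real (card A) powr (1 + \<delta> / real r) / Lg (card A) powr E"
    proof (cases "real n \<le> 2 * real (card As)")
      case True
      define m where "m = card As"
      have Assub: "As \<subseteq> A" unfolding As_def by auto
      have fAs: "finite As" using fA Assub finite_subset by blast
      have m1: "m \<ge> 1" using True n1 unfolding m_def by (cases "card As") auto
      have neAs: "As \<noteq> {}" using m1 unfolding m_def by auto
      have mn: "m \<le> n" unfolding m_def n_def by (rule card_mono[OF fA Assub])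
      obtain j where jS: "j \<in> S" using cS r by (metis card.empty ex_in_conv not_numeral_le_zero)
      have agAs: "agree S As" using ag Assub unfolding agree_def by blast
      have nzAs: "\<forall>x\<in>As. \<forall>i\<in>S. x i \<noteq> 0" unfolding As_def by auto
      have NZ: "FV As \<ge> min (c1/2) c0 * real m powr a / Lg m powr E"
        using nonzero_case[OF r d c0 E0 c1 E1 g0 g1 fS cS jS fAs neAs agAs nzAs]
        unfolding m_def a_def E_def by simp
      have "(real n / 2) powr a = real n powr a / 2 powr a" by (rule powr_divide)
      also have "\<dots> = 2 powr (-a) * real n powr a"
        by (simp only: powr_minus divide_inverse mult.commute)
      finally have "2 powr (-a) * real n powr a = (real n / 2) powr a" by simp
      also have "\<dots> \<le> real m powr a" by (rule powr_mono2) (use a0 True in \<open>auto simp: m_def\<close>)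
      finally have nm: "2 powr (-a) * real n powr a \<le> real m powr a" .
      have "c * real n powr a / Lg n powr E \<le> cn * real n powr a / Lg n powr E"
        by (rule scale_le) (use cpos Ln in \<open>auto simp: c_def\<close>)
      also have "\<dots> = min (c1/2) c0 * (2 powr (-a) * real n powr a) / Lg n powr E"
        unfolding cn_def by (simp add: mult.assoc)
      also have "\<dots> \<le> min (c1/2) c0 * real m powr a / Lg n powr E"
        by (intro divide_right_mono mult_left_mono nm) (use c0 c1 in auto)
      also have "\<dots> \<le> min (c1/2) c0 * real m powr a / Lg m powr E"
        by (intro divide_left_mono powr_mono2 Lg_mono mult_nonneg_nonneg) (use m1 mn E0' c0 c1 Lg_ge1[OF m1] Ln in auto)
      also have "\<dots> \<le> FV As" by (rule NZ)
      also have "\<dots> \<le> FV A" by (rule FV_mono[OF Assub fA])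
      finally show ?thesis unfolding n_def a_def .
    next
      case False
      define Z where "Z k = {x\<in>A. x k = 0}" for k
      have "A - As = (\<Union>k\<in>S. Z k)" unfolding As_def Z_def by auto
      then have "card (A - As) \<le> (\<Sum>k\<in>S. card (Z k))" using card_UN_le[OF fS] by simp
      moreover have "card (A - As) = n - card As" unfolding n_def
        by (rule card_Diff_subset) (use fA in \<open>auto simp: As_def intro: finite_subset\<close>)
      moreover have "card As \<le> n" unfolding n_def As_def by (rule card_mono[OF fA]) auto
      ultimately have "n - card As \<le> (\<Sum>k\<in>S. card (Z k))" by simp
      then have "real (n - card As) \<le> real (\<Sum>k\<in>S. card (Z k))" by (simp only: of_nat_le_iff)
      then have sumZ: "real n - real (card As) \<le> (\<Sum>k\<in>S. real (card (Z k)))"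
        using \<open>card As \<le> n\<close> by (simp add: of_nat_diff)
      have "\<exists>k\<in>S. real n \<le> 2 * real r * real (card (Z k))"
      proof (rule ccontr)
        assume "\<not> ?thesis"
        then have lt: "\<And>k. k \<in> S \<Longrightarrow> real (card (Z k)) < real n / (2 * real r)"
          using r by (auto simp: field_simps)
        have Sne: "S \<noteq> {}" using cS r by auto
        have "(\<Sum>k\<in>S. real (card (Z k))) < (\<Sum>k\<in>S. real n / (2 * real r))"
          by (rule sum_strict_mono[OF fS Sne lt])
        also have "\<dots> = real n / 2" using cS r by simp
        finally show False using sumZ False by linarith
      qed
      then obtain k where kS: "k \<in> S" and kb: "real n \<le> 2 * real r * real (card (Z k))" by blast
      have ZC: "FV A \<ge> c1 * (2 * real r) powr (-a) * real n powr a / Lg n powr E1"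
        using zero_case[OF r d c1 E1 g1 fS cS kS fA ne ag] kb unfolding Z_def n_def a_def by simp
      have "c * real n powr a / Lg n powr E \<le> cz * real n powr a / Lg n powr E1"
        by (rule scale_le) (use cpos Ln a0 in \<open>auto simp: c_def E_def\<close>)
      also have "\<dots> \<le> FV A" using ZC unfolding cz_def .
      finally show ?thesis unfolding n_def a_def .
    qed
  qed
  then show ?thesis using cpos E0' by blast
qed

lemma all_r:
  assumes d: "\<delta> > 0" and sp: "sp_admissible \<delta>" and r: "r \<ge> 1"
  shows "\<exists>c>0. \<exists>E\<ge>0. goodr \<delta> r c E"
proof -
  obtain c0 E0 where c0: "c0 > 0" and E0: "E0 \<ge> 0" and g0: "good1 \<delta> c0 E0"
    using sp_to_good1[OF sp] by blast
  show ?thesis using r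
  proof (induction r rule: nat_induct_at_least)
    case base
    then show ?case using base_case[OF g0] c0 E0 by blast
  next
    case (Suc n)
    then obtain c1 E1 where "c1 > 0" "E1 \<ge> 0" "goodr \<delta> n c1 E1" by blast
    then show ?case using step[of "Suc n" \<delta> c0 E0 c1 E1] Suc d c0 E0 g0 by simp
  qed
qed



lemma axis_agree:
  assumes "A \<subseteq> axis_subspace d S a"
  shows "agree S A"
  unfolding agree_def
proof (intro ballI allI impI)
  fix x y i assume x: "x \<in> A" and y: "y \<in> A" and i: "i \<notin> S"
  have x': "x \<in> axis_subspace d S a" and y': "y \<in> axis_subspace d S a" using x y assms by auto
  show "x i = y i"
  proof (cases "d \<le> i")
    case True then show ?thesis using x' y' unfolding axis_subspace_def by simp
  next
    case False then have "i < d" by simp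
    then show ?thesis using x' y' i unfolding axis_subspace_def by simp
  qed
qed

theorem lemma3p1:
  fixes \<delta>1 :: real and r :: nat
  assumes "\<delta>1 > 0" and "sp_admissible \<delta>1" and "r \<ge> 1"
  shows "\<exists>C>0. \<exists>D::real. \<forall>(d::nat) (S::nat set) (a::nat \<Rightarrow> real) (A::(nat \<Rightarrow> real) set).
           d \<ge> 2 \<longrightarrow> S \<subseteq> {..<d} \<longrightarrow> card S = r \<longrightarrow> r \<le> d - 1 \<longrightarrow>
           A \<subseteq> axis_subspace d S a \<longrightarrow> finite A \<longrightarrow> A \<noteq> {} \<longrightarrow>
           real (card (sumset_vec A)) + real (card (prodset_vec A))
             \<ge> C * real (card A) powr (1 + \<delta>1 / real r) * ln (real (card A)) powr D"
proof -
  obtain c E where c: "c > 0" and E: "E \<ge> 0" and g: "goodr \<delta>1 r c E"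
    using all_r[OF assms] by blast
  define C where "C = c / 3 powr E"
  have C: "C > 0" unfolding C_def using c by simp
  have X: "\<forall>(d::nat) (S::nat set) (a::nat \<Rightarrow> real) (A::(nat \<Rightarrow> real) set).
           d \<ge> 2 \<longrightarrow> S \<subseteq> {..<d} \<longrightarrow> card S = r \<longrightarrow> r \<le> d - 1 \<longrightarrow>
           A \<subseteq> axis_subspace d S a \<longrightarrow> finite A \<longrightarrow> A \<noteq> {} \<longrightarrow>
           real (card (sumset_vec A)) + real (card (prodset_vec A))
             \<ge> C * real (card A) powr (1 + \<delta>1 / real r) * ln (real (card A)) powr (-E)"
  proof (intro allI impI)
    fix d S a A
    assume Sd: "S \<subseteq> {..<d}" and cS: "card S = r" and sub: "A \<subseteq> axis_subspace d S a"
      and fA: "finite A" and ne: "A \<noteq> {}"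
    have fS: "finite S" using Sd finite_subset by blast
    have FVe: "FV A = real (card (sumset_vec A)) + real (card (prodset_vec A))"
      unfolding FV_def sumset_vec_eq prodset_vec_eq ..
    define n where "n = card A"
    have n1: "n \<ge> 1" unfolding n_def using fA ne by (simp add: Suc_leI card_gt_0_iff)
    have G: "FV A \<ge> c * real n powr (1 + \<delta>1 / real r) / Lg n powr E"
      using g[unfolded goodr_def, rule_format, OF fS cS fA ne axis_agree[OF sub]] unfolding n_def .
    show "real (card (sumset_vec A)) + real (card (prodset_vec A))
             \<ge> C * real (card A) powr (1 + \<delta>1 / real r) * ln (real (card A)) powr (-E)"
    proof (cases "n = 1")
      case True
      then have "ln (real (card A)) powr (-E) = 0" unfolding n_def by simp
      moreover have "FV A \<ge> 0" unfolding FV_def by simp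
      ultimately show ?thesis using FVe by simp
    next
      case False
      then have n2: "real n \<ge> 2" using n1 by linarith
      have lpos: "ln (real n) > 0" using n2 by simp
      have "ln (real n) \<ge> ln 2" using n2 by simp
      then have lh: "ln (real n) \<ge> 1/2" using ln2_ge_half by linarith
      have LLn: "Lg n \<le> 3 * ln (real n)" unfolding Lg_def using lh by simp
      have "Lg n powr E \<le> (3 * ln (real n)) powr E"
        by (rule powr_mono2[OF E _ LLn]) (use Lg_ge1[OF n1] in simp)
      also have "\<dots> = 3 powr E * ln (real n) powr E" using lpos by (simp add: powr_mult)
      finally have LL: "Lg n powr E \<le> 3 powr E * ln (real n) powr E" .
      have Lpos: "Lg n powr E > 0" using Lg_ge1[OF n1] by simp
      have eq: "C * ln (real n) powr (-E) = c / (3 powr E * ln (real n) powr E)"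
        unfolding C_def using lpos by (simp add: powr_minus divide_inverse)
      have "c / (3 powr E * ln (real n) powr E) \<le> c / Lg n powr E"
        by (rule divide_left_mono[OF LL]) (use c Lpos lpos in auto)
      then have "C * ln (real n) powr (-E) * real n powr (1 + \<delta>1 / real r)
          \<le> c / Lg n powr E * real n powr (1 + \<delta>1 / real r)"
        unfolding eq by (rule mult_right_mono) simp
      also have "\<dots> = c * real n powr (1 + \<delta>1 / real r) / Lg n powr E" by simp
      also have "\<dots> \<le> FV A" by (rule G)
      finally show ?thesis using FVe unfolding n_def by (simp add: mult_ac)
    qed
  qed
  show ?thesis by (rule exI[of _ C], rule conjI[OF C], rule exI[of _ "-E"], rule X)
qed

end
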